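(* Let $G$ be a graph, $\mathcal{F}$ a set of cycles, $x \in V(G)$, and $Y \subseteq V(G)\setminus\{x\}$ such that $N[Y] \cap V(G - Y) \subseteq \{x\}$ and $G[\{x\}\cup Y]$ contains no $\mathcal{F}$-graph. Then $\iota(G,\mathcal{F}) = \iota(G - Y, \mathcal{F})$, and every $\mathcal{F}$-isolating set of $G - Y$ is an $\mathcal{F}$-isolating set of $G$.
   Context: All graphs are finite and simple; cycles are graphs isomorphic to $C_k$ for some $k\ge 3$. For a set $\mathcal{F}$ of graphs, an $\mathcal{F}$-graph is a graph isomorphic to a member of $\mathcal{F}$. For $X \subseteq V(G)$, $N[X]$ is the closed neighbourhood $\bigcup_{v\in X}(\{v\}\cup N(v))$, $G[X]$ is the subgraph induced by $X$, and $G - X$ is the subgraph induced by $V(G)\setminus X$. A set $D\subseteq V(G)$ is an $\mathcal{F}$-isolating set of $G$ if $G - N[D]$ contains no $\mathcal{F}$-graph as a subgraph; $\iota(G,\mathcal{F})$ is the minimum size of an $\mathcal{F}$-isolating set of $G$. *)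

theory Defs
  imports Main
begin

type_synonym 'a graph = "'a set \<times> 'a set set"

abbreviation verts :: "'a graph \<Rightarrow> 'a set" where "verts G \<equiv> fst G"
abbreviation edges :: "'a graph \<Rightarrow> 'a set set" where "edges G \<equiv> snd G"

definition graph :: "'a graph \<Rightarrow> bool" where
  "graph G \<longleftrightarrow> finite (verts G) \<and>
     (\<forall>e\<in>edges G. \<exists>u v. e = {u, v} \<and> u \<noteq> v \<and> u \<in> verts G \<and> v \<in> verts G)"

definition graph_iso :: "'a graph \<Rightarrow> 'b graph \<Rightarrow> bool" where
  "graph_iso G H \<longleftrightarrow> (\<exists>f. bij_betw f (verts G) (verts H) \<and>
     (\<forall>u\<in>verts G. \<forall>v\<in>verts G. {u, v} \<in> edges G \<longleftrightarrow> {f u, f v} \<in> edges H))"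

definition cycle_graph :: "nat \<Rightarrow> nat graph" where
  "cycle_graph k = ({0..<k}, {{i, (i + 1) mod k} | i. i < k})"

definition is_cycle :: "'a graph \<Rightarrow> bool" where
  "is_cycle H \<longleftrightarrow> graph H \<and> (\<exists>k\<ge>3. graph_iso H (cycle_graph k))"

definition subgraph :: "'a graph \<Rightarrow> 'a graph \<Rightarrow> bool" where
  "subgraph H G \<longleftrightarrow> graph H \<and> verts H \<subseteq> verts G \<and> edges H \<subseteq> edges G"

definition contains_F :: "'a graph \<Rightarrow> 'b graph set \<Rightarrow> bool" where
  "contains_F G \<F> \<longleftrightarrow> (\<exists>H. subgraph H G \<and> (\<exists>F\<in>\<F>. graph_iso H F))"

definition closed_nbhd :: "'a graph \<Rightarrow> 'a set \<Rightarrow> 'a set" where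
  "closed_nbhd G X = X \<union> {v. \<exists>u\<in>X. {u, v} \<in> edges G}"

definition induced :: "'a graph \<Rightarrow> 'a set \<Rightarrow> 'a graph" where
  "induced G X = (X, {e \<in> edges G. e \<subseteq> X})"

definition remove :: "'a graph \<Rightarrow> 'a set \<Rightarrow> 'a graph" where
  "remove G X = induced G (verts G - X)"

definition isolating :: "'a graph \<Rightarrow> 'b graph set \<Rightarrow> 'a set \<Rightarrow> bool" where
  "isolating G \<F> D \<longleftrightarrow> D \<subseteq> verts G \<and> \<not> contains_F (remove G (closed_nbhd G D)) \<F>"

definition iota :: "'a graph \<Rightarrow> 'b graph set \<Rightarrow> nat" where
  "iota G \<F> = (LEAST n. \<exists>D. isolating G \<F> D \<and> card D = n)"

end

theory Submission
  imports Defs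
begin

lemma graph_iso_trans:
  assumes "graph_iso A B" "graph_iso B C" shows "graph_iso A C"
proof -
  obtain f where f: "bij_betw f (verts A) (verts B)"
    "\<forall>u\<in>verts A. \<forall>v\<in>verts A. {u, v} \<in> edges A \<longleftrightarrow> {f u, f v} \<in> edges B"
    using assms(1) unfolding graph_iso_def by blast
  obtain g where g: "bij_betw g (verts B) (verts C)"
    "\<forall>u\<in>verts B. \<forall>v\<in>verts B. {u, v} \<in> edges B \<longleftrightarrow> {g u, g v} \<in> edges C"
    using assms(2) unfolding graph_iso_def by blast
  have "bij_betw (g \<circ> f) (verts A) (verts C)" using f(1) g(1) by (rule bij_betw_trans)
  moreover have "\<forall>u\<in>verts A. \<forall>v\<in>verts A. {u, v} \<in> edges A \<longleftrightarrow> {(g\<circ>f) u, (g\<circ>f) v} \<in> edges C"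
    using f g bij_betw_apply[OF f(1)] by auto
  ultimately show ?thesis unfolding graph_iso_def by blast
qed

lemma chain_const:
  fixes R :: "nat \<Rightarrow> bool"
  assumes "\<And>j. 1 \<le> j \<Longrightarrow> j + 1 < k \<Longrightarrow> (R j \<longleftrightarrow> R (j+1))"
  shows "1 \<le> j \<Longrightarrow> j < k \<Longrightarrow> (R j \<longleftrightarrow> R 1)"
proof (induction j)
  case 0 then show ?case by simp
next
  case (Suc j)
  show ?case
  proof (cases "j = 0")
    case True then show ?thesis by simp
  next
    case False
    then have "R j \<longleftrightarrow> R 1" using Suc by simp
    moreover have "R j \<longleftrightarrow> R (j+1)" using assms[of j] False Suc.prems by simp
    ultimately show ?thesis by simp
  qed
qed

lemma mod_ne_self:
  fixes c j k :: nat
  assumes "c < k" "0 < j" "j < k" shows "(c + j) mod k \<noteq> c"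
proof
  assume h: "(c + j) mod k = c"
  show False
  proof (cases "c + j < k")
    case True then show False using h assms by simp
  next
    case False
    then have "(c + j) mod k = c + j - k" using assms by (simp add: mod_if)
    then show False using h assms by simp
  qed
qed

lemma cycle_split:
  fixes H :: "'a graph" and P :: "'a \<Rightarrow> bool"
  assumes iso: "graph_iso H (cycle_graph k)" and k: "k \<ge> 3"
    and hyp: "\<And>u v. u \<in> verts H \<Longrightarrow> v \<in> verts H \<Longrightarrow> {u, v} \<in> edges H \<Longrightarrow> u \<noteq> x \<Longrightarrow> v \<noteq> x
       \<Longrightarrow> (P u \<longleftrightarrow> P v)"
  shows "(\<forall>v\<in>verts H - {x}. P v) \<or> (\<forall>v\<in>verts H - {x}. \<not> P v)"
proof -
  obtain \<phi> where phi: "bij_betw \<phi> (verts H) {0..<k}"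
    "\<forall>u\<in>verts H. \<forall>v\<in>verts H. {u, v} \<in> edges H \<longleftrightarrow> {\<phi> u, \<phi> v} \<in> edges (cycle_graph k)"
    using iso unfolding graph_iso_def cycle_graph_def by auto
  define \<psi> where "\<psi> = inv_into (verts H) \<phi>"
  have psiV: "\<psi> i \<in> verts H" if "i < k" for i
    using that phi(1) unfolding \<psi>_def
    by (metis atLeastLessThan_iff bij_betw_def inv_into_into zero_le)
  have phipsi: "\<phi> (\<psi> i) = i" if "i < k" for i
    using that phi(1) unfolding \<psi>_def
    by (metis atLeastLessThan_iff bij_betw_def f_inv_into_f zero_le)
  have psiphi: "\<psi> (\<phi> v) = v" if "v \<in> verts H" for v
    using that phi(1) unfolding \<psi>_def by (meson bij_betw_inv_into_left)
  have phiV: "\<phi> v < k" if "v \<in> verts H" for v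
    using that phi(1) bij_betw_apply by fastforce
  have edge: "{\<psi> i, \<psi> ((i+1) mod k)} \<in> edges H" if "i < k" for i
  proof -
    have "k > 0" using k by simp
    have "{\<phi> (\<psi> i), \<phi> (\<psi> ((i+1) mod k))} \<in> edges (cycle_graph k)"
      using that \<open>k > 0\<close> phipsi unfolding cycle_graph_def by auto
    then show ?thesis using phi(2) psiV that \<open>k > 0\<close> by auto
  qed
  define c where "c = (if x \<in> verts H then \<phi> x else 0)"
  have ck: "c < k" using phiV k unfolding c_def by auto
  define w where "w j = \<psi> ((c + j) mod k)" for j
  have wV: "w j \<in> verts H" for j using psiV k unfolding w_def by simp
  have wx: "w j \<noteq> x" if "0 < j" "j < k" for j
  proof
    assume "w j = x"
    then have xH: "x \<in> verts H" using wV by metis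
    have "\<phi> (w j) = (c + j) mod k" unfolding w_def using phipsi k by simp
    then have "(c + j) mod k = c" using \<open>w j = x\<close> xH unfolding c_def by simp
    then show False using mod_ne_self[OF ck that] by simp
  qed
  have step: "P (w j) \<longleftrightarrow> P (w (j+1))" if "1 \<le> j" "j + 1 < k" for j
  proof -
    have e: "{w j, w (j+1)} \<in> edges H"
      using edge[of "(c+j) mod k"] k unfolding w_def by (simp add: mod_Suc_eq add.assoc)
    show ?thesis using hyp[OF wV wV e] wx that by simp
  qed
  have const: "P (w j) \<longleftrightarrow> P (w 1)" if "1 \<le> j" "j < k" for j
    using chain_const[of k "\<lambda>j. P (w j)", OF step] that by blast
  have all: "P v \<longleftrightarrow> P (w 1)" if v: "v \<in> verts H" "v \<noteq> x" for v
  proof -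
    define j where "j = (\<phi> v + k - c) mod k"
    have jk: "j < k" unfolding j_def using k by simp
    have "(c + j) mod k = (c + (\<phi> v + k - c)) mod k" unfolding j_def by (simp add: mod_add_right_eq)
    also have "\<dots> = (\<phi> v + k) mod k" using ck by simp
    also have "\<dots> = \<phi> v" using phiV[OF v(1)] by simp
    finally have wv: "w j = v" unfolding w_def using psiphi v by simp
    show ?thesis
    proof (cases "j = 0")
      case False then show ?thesis using const[of j] jk wv by simp
    next
      case True
      then have xH: "x \<notin> verts H"
      proof -
        have "\<phi> v = c mod k" using wv True phiV[OF v(1)] unfolding w_def
          by (metis add.right_neutral phipsi ck mod_less)
        then show ?thesis using v ck psiphi unfolding c_def
          by (metis mod_less phiV)
      qed
      have e: "{w 0, w 1} \<in> edges H"
        using edge[of "c mod k"] k unfolding w_def by (simp add: mod_Suc_eq)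
      have "P (w 0) \<longleftrightarrow> P (w 1)" using hyp[OF wV wV e] xH wV by metis
      then show ?thesis using wv True by simp
    qed
  qed
  show ?thesis using all by blast
qed


lemma subgraph_inducedI:
  assumes "graph H" "verts H \<subseteq> A" "edges H \<subseteq> edges G"
  shows "subgraph H (induced G A)"
proof -
  have "e \<subseteq> verts H" if eH: "e \<in> edges H" for e
  proof -
    obtain u v where "e = {u, v}" "u \<in> verts H" "v \<in> verts H"
      using assms(1) eH unfolding graph_def by meson
    then show ?thesis by simp
  qed
  then show ?thesis using assms unfolding subgraph_def induced_def by auto
qed

lemma subgraph_induced_D:
  assumes "subgraph H (induced G A)"
  shows "graph H" "verts H \<subseteq> A" "edges H \<subseteq> edges G"
  using assms unfolding subgraph_def induced_def by auto

lemma remove_remove: "remove (remove G Y) S = induced G (verts G - Y - S)"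
  unfolding remove_def induced_def by auto

lemma verts_remove: "verts (remove G Y) = verts G - Y"
  unfolding remove_def induced_def by simp

lemma edges_remove: "edges (remove G Y) = {e \<in> edges G. e \<subseteq> verts G - Y}"
  unfolding remove_def induced_def by simp

lemma iso_cycle_nonempty:
  assumes "graph_iso H F" "is_cycle F" shows "verts H \<noteq> {}"
proof -
  obtain k where k: "k \<ge> 3" "graph_iso F (cycle_graph k)" using assms(2) unfolding is_cycle_def by blast
  have "graph_iso H (cycle_graph k)" using graph_iso_trans assms(1) k(2) by blast
  then obtain f where "bij_betw f (verts H) {0..<k}" unfolding graph_iso_def cycle_graph_def by auto
  then have "card (verts H) = k" by (simp add: bij_betw_same_card)
  then show ?thesis using k(1) by auto
qed

lemma isolating_all:
  assumes "\<forall>F\<in>\<F>. is_cycle F"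
  shows "isolating G \<F> (verts G)"
proof -
  have "\<not> contains_F (remove G (closed_nbhd G (verts G))) \<F>"
  proof
    assume "contains_F (remove G (closed_nbhd G (verts G))) \<F>"
    then obtain H F where H: "subgraph H (remove G (closed_nbhd G (verts G)))" "F \<in> \<F>" "graph_iso H F"
      unfolding contains_F_def by blast
    have "verts H = {}" using H(1) unfolding subgraph_def remove_def induced_def closed_nbhd_def by auto
    then show False using iso_cycle_nonempty H assms by blast
  qed
  then show ?thesis unfolding isolating_def by simp
qed

theorem lemma3:
  fixes G :: "'a graph" and \<F> :: "nat graph set" and x :: 'a and Y :: "'a set"
  assumes "graph G"
    and "\<forall>F\<in>\<F>. is_cycle F"
    and "x \<in> verts G"
    and "Y \<subseteq> verts G - {x}"
    and "closed_nbhd G Y \<inter> verts (remove G Y) \<subseteq> {x}"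
    and "\<not> contains_F (induced G ({x} \<union> Y)) \<F>"
  shows "iota G \<F> = iota (remove G Y) \<F> \<and>
    (\<forall>D. isolating (remove G Y) \<F> D \<longrightarrow> isolating G \<F> D)"
proof -
  have cross: "v = x" if "u \<in> Y" "v \<in> verts G" "v \<notin> Y" "{u, v} \<in> edges G" for u v
    using assms(5) that unfolding closed_nbhd_def verts_remove by blast
  have split: "verts H \<subseteq> {x} \<union> Y \<or> verts H \<inter> Y = {}"
    if H: "graph H" "verts H \<subseteq> verts G" "edges H \<subseteq> edges G" "F \<in> \<F>" "graph_iso H F" for H F
  proof -
    obtain k where k: "k \<ge> 3" "graph_iso F (cycle_graph k)" using assms(2) H(4) unfolding is_cycle_def by blast
    have iso: "graph_iso H (cycle_graph k)" using graph_iso_trans H(5) k(2) by blast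
    have "(\<forall>v\<in>verts H - {x}. v \<in> Y) \<or> (\<forall>v\<in>verts H - {x}. v \<notin> Y)"
    proof (rule cycle_split[OF iso k(1)])
      fix u v assume uv: "u \<in> verts H" "v \<in> verts H" "{u, v} \<in> edges H" "u \<noteq> x" "v \<noteq> x"
      have e: "{u, v} \<in> edges G" "{v, u} \<in> edges G" using uv H(3) by (auto simp: insert_commute)
      show "u \<in> Y \<longleftrightarrow> v \<in> Y" using cross[OF _ _ _ e(1)] cross[OF _ _ _ e(2)] uv H(2) by blast
    qed
    then show ?thesis using assms(4) by blast
  qed
  have part2: "isolating G \<F> D" if D: "isolating (remove G Y) \<F> D" for D
  proof -
    have DV: "D \<subseteq> verts G" using D unfolding isolating_def verts_remove by blast
    have "\<not> contains_F (remove G (closed_nbhd G D)) \<F>"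
    proof
      assume "contains_F (remove G (closed_nbhd G D)) \<F>"
      then obtain H F where H: "subgraph H (remove G (closed_nbhd G D))" "F \<in> \<F>" "graph_iso H F"
        unfolding contains_F_def by blast
      have Hs: "graph H" "verts H \<subseteq> verts G - closed_nbhd G D" "edges H \<subseteq> edges G"
        using subgraph_induced_D[OF H(1)[unfolded remove_def]] by auto
      have "verts H \<subseteq> {x} \<union> Y \<or> verts H \<inter> Y = {}"
        using split[OF Hs(1) _ Hs(3) H(2,3)] Hs(2) by blast
      then show False
      proof
        assume "verts H \<subseteq> {x} \<union> Y"
        then have "subgraph H (induced G ({x} \<union> Y))" using subgraph_inducedI Hs by blast
        then show False using assms(6) H unfolding contains_F_def by blast
      next
        assume hy: "verts H \<inter> Y = {}"
        have "closed_nbhd (remove G Y) D \<subseteq> closed_nbhd G D"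
          unfolding closed_nbhd_def edges_remove by auto
        then have "verts H \<subseteq> verts G - Y - closed_nbhd (remove G Y) D" using hy Hs(2) by blast
        then have "subgraph H (remove (remove G Y) (closed_nbhd (remove G Y) D))"
          unfolding remove_remove using subgraph_inducedI Hs by blast
        then show False using D H unfolding isolating_def contains_F_def by blast
      qed
    qed
    then show ?thesis using DV unfolding isolating_def by simp
  qed
  have ex1: "\<exists>n D. isolating G \<F> D \<and> card D = n" using isolating_all[OF assms(2)] by blast
  have ex2: "\<exists>n D. isolating (remove G Y) \<F> D \<and> card D = n"
    using isolating_all[OF assms(2)] by blast
  obtain D1 where D1: "isolating G \<F> D1" "card D1 = iota G \<F>"
    using LeastI_ex[OF ex1] unfolding iota_def by blast
  obtain D2 where D2: "isolating (remove G Y) \<F> D2" "card D2 = iota (remove G Y) \<F>"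
    using LeastI_ex[OF ex2] unfolding iota_def by blast
  have le1: "iota G \<F> \<le> iota (remove G Y) \<F>"
    using part2[OF D2(1)] D2(2) unfolding iota_def by (metis (mono_tags, lifting) Least_le)
  define D' where "D' = (D1 - Y) \<union> (if D1 \<inter> Y = {} then {} else {x})"
  have finD1: "finite D1" using D1(1) assms(1) unfolding isolating_def graph_def
    using finite_subset by blast
  have cardD': "card D' \<le> card D1"
  proof (cases "D1 \<inter> Y = {}")
    case True then have "D' = D1" unfolding D'_def by auto
    then show ?thesis by simp
  next
    case False
    have "card D' \<le> card (D1 - Y) + card {x}" unfolding D'_def using False finD1 by (simp add: card_insert_if)
    moreover have "card (D1 - Y) < card D1" using False finD1 by (intro psubset_card_mono) auto
    ultimately show ?thesis by simp
  qed
  have D'iso: "isolating (remove G Y) \<F> D'"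
  proof -
    have D1V: "D1 \<subseteq> verts G" using D1(1) unfolding isolating_def by blast
    have D'V: "D' \<subseteq> verts G - Y" unfolding D'_def using D1V assms(3,4) by auto
    have sub: "verts G - Y - closed_nbhd (remove G Y) D' \<subseteq> verts G - closed_nbhd G D1"
    proof
      fix v assume v: "v \<in> verts G - Y - closed_nbhd (remove G Y) D'"
      show "v \<in> verts G - closed_nbhd G D1"
      proof (rule ccontr)
        assume "v \<notin> verts G - closed_nbhd G D1"
        then have "v \<in> D1 \<or> (\<exists>u\<in>D1. {u, v} \<in> edges G)" using v unfolding closed_nbhd_def by blast
        then show False
        proof
          assume "v \<in> D1" then have "v \<in> D'" using v unfolding D'_def by auto
          then show False using v unfolding closed_nbhd_def by blast
        next
          assume "\<exists>u\<in>D1. {u, v} \<in> edges G"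
          then obtain u where u: "u \<in> D1" "{u, v} \<in> edges G" by blast
          show False
          proof (cases "u \<in> Y")
            case True
            then have "v = x" using cross u v by blast
            moreover have "x \<in> D'" using True u unfolding D'_def by auto
            ultimately show False using v unfolding closed_nbhd_def by blast
          next
            case False
            then have "u \<in> D'" "u \<in> verts G" using u D1V unfolding D'_def by auto
            then have "{u, v} \<in> edges (remove G Y)" using u v False unfolding edges_remove by auto
            then show False using \<open>u \<in> D'\<close> v unfolding closed_nbhd_def by blast
          qed
        qed
      qed
    qed
    have "\<not> contains_F (remove (remove G Y) (closed_nbhd (remove G Y) D')) \<F>"
    proof
      assume "contains_F (remove (remove G Y) (closed_nbhd (remove G Y) D')) \<F>"
      then obtain H F where H: "subgraph H (induced G (verts G - Y - closed_nbhd (remove G Y) D'))"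
        "F \<in> \<F>" "graph_iso H F"
        unfolding contains_F_def remove_remove by blast
      note Hs = subgraph_induced_D[OF H(1)]
      have "subgraph H (remove G (closed_nbhd G D1))"
        unfolding remove_def using subgraph_inducedI[OF Hs(1) _ Hs(3)] Hs(2) sub by blast
      then show False using D1(1) H unfolding isolating_def contains_F_def by blast
    qed
    then show ?thesis using D'V unfolding isolating_def verts_remove by simp
  qed
  have le2: "iota (remove G Y) \<F> \<le> iota G \<F>"
  proof -
    have "iota (remove G Y) \<F> \<le> card D'" using D'iso unfolding iota_def
      by (metis (mono_tags, lifting) Least_le)
    then show ?thesis using cardD' D1(2) by simp
  qed
  show ?thesis using le1 le2 part2 by simp
qed

end
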